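(* For every integer $n \ge 1$, $$\sum_{k=2}^{\infty} \log\Big( \sum_{j=1}^{n} j^{-k} \Big) < 1.$$
   Context: $\log$ denotes the natural logarithm. *)

theory Defs
  imports Complex_Main
begin

end

theory Submission
  imports Defs
begin

lemma geo:
  assumes "j \<ge> (2::nat)"
  shows "(\<lambda>k. 1 / real j ^ (k+2)) sums (1/(real j * (real j - 1)))"
proof -
  have q: "norm (1/real j) < 1" using assms by simp
  from geometric_sums[OF q] have "(\<lambda>k. (1/real j)^k) sums (1/(1 - 1/real j))" .
  then have "(\<lambda>k. (1/real j)^2 * (1/real j)^k) sums ((1/real j)^2 * (1/(1-1/real j)))"
    by (rule sums_mult)
  moreover have "(1/real j)^2 * (1/(1-1/real j)) = 1/(real j*(real j-1))"
    using assms by (simp add: field_simps power2_eq_square)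
  moreover have "\<And>k. (1/real j)^2*(1/real j)^k = 1/real j^(k+2)"
    by (simp add: power_add power_one_over mult.commute power2_eq_square)
  ultimately show ?thesis by simp
qed

lemma tel: "n \<ge> 1 \<Longrightarrow> (\<Sum>j=2..n. 1/(real j*(real j-1))) = 1 - 1/real n"
proof (induction n rule: dec_induct)
  case base
  then show ?case by simp
next
  case (step m)
  have "(\<Sum>j=2..Suc m. 1/(real j*(real j-1))) = (\<Sum>j=2..m. 1/(real j*(real j-1))) + 1/(real (Suc m) * real m)"
    using step.hyps by (simp add: sum.atLeast_Suc_atMost_Suc_shift)
  also have "\<dots> = 1 - 1/real m + 1/(real (Suc m) * real m)" using step by simp
  also have "\<dots> = 1 - 1/real (Suc m)"
  proof -
    have "real m > 0" using step.hyps by simp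
    then have "real m + real m * real m \<noteq> 0" by (metis add_pos_pos mult_pos_pos less_irrefl)
    with \<open>real m > 0\<close> show ?thesis by (simp add: field_simps)
  qed
  finally show ?case .
qed

theorem mainTheorem3:
  fixes n :: nat
  assumes "n \<ge> 1"
  shows "summable (\<lambda>k. ln (\<Sum>j=1..n. 1 / real j ^ (k + 2)))
    \<and> (\<Sum>k. ln (\<Sum>j=1..n. 1 / real j ^ (k + 2))) < 1"
proof -
  define b where "b k = (\<Sum>j=2..n. 1/real j^(k+2))" for k
  have bs: "b sums (\<Sum>j=2..n. 1/(real j*(real j-1)))"
    unfolding b_def by (rule sums_sum) (use geo in auto)
  have eq: "(\<Sum>j=1..n. 1 / real j ^ (k + 2)) = 1 + b k" for k
    unfolding b_def using assms by (simp add: sum.atLeast_Suc_atMost numeral_2_eq_2)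
  have b0: "b k \<ge> 0" for k unfolding b_def by (intro sum_nonneg) auto
  have le: "norm (ln (1 + b k)) \<le> b k" for k
    using b0[of k] ln_add_one_self_le_self[of "b k"] by simp
  have sa: "summable (\<lambda>k. ln (1 + b k))"
    by (rule summable_comparison_test[OF _ sums_summable[OF bs]]) (use le in auto)
  have "(\<Sum>k. ln (1 + b k)) \<le> (\<Sum>k. b k)"
    by (rule suminf_le) (use le sa sums_summable[OF bs] in \<open>auto simp: abs_le_iff\<close>)
  also have "\<dots> = 1 - 1/real n" using bs tel[OF assms] sums_unique by metis
  also have "\<dots> < 1" using assms by simp
  finally show ?thesis using sa by (simp only: eq)
qed

end
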